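(* Let $G$ be a finite group, let $R$ be a Cayley subset of $G$, and suppose $\Gamma:=\mathrm{Cay}(G,R)$ is a GRR. Then either $|\Gamma[R]_I|\le 1$ or $|\Gamma^c[R^c]_I|\le 1$. Moreover, when $|G|>2$, either $G=\langle R\setminus\Gamma[R]_I\rangle$ and $|\Gamma[R]_I|\le 1$, or $G=\langle R^c\setminus\Gamma^c[R^c]_I\rangle$ and $|\Gamma^c[R^c]_I|\le 1$.
   Context: A Cayley subset of $G$ is a subset $R$ with $R=R^{-1}$ and $1\notin R$. $\mathrm{Cay}(G,R)$ is the graph with vertex set $G$ and edges $\{g,rg\}$ for $g\in G$, $r\in R$. It is a GRR if its automorphism group equals the group of right multiplications by elements of $G$ (equivalently, is isomorphic to $G$). $R^c:=G\setminus(\{1\}\cup R)$ and $\Gamma^c=\mathrm{Cay}(G,R^c)$ is the complement of $\Gamma$. For a graph $\Sigma$ and a vertex subset $X$, $\Sigma[X]_I$ denotes the set of isolated vertices of the subgraph of $\Sigma$ induced on $X$, i.e. the $v\in X$ with no neighbour in $X$. *)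

theory Defs
  imports "HOL-Algebra.Algebra"
begin

definition cayley_subset :: "('a, 'b) monoid_scheme \<Rightarrow> 'a set \<Rightarrow> bool" where
  "cayley_subset G R \<longleftrightarrow> R \<subseteq> carrier G \<and> (\<forall>r\<in>R. inv\<^bsub>G\<^esub> r \<in> R) \<and> \<one>\<^bsub>G\<^esub> \<notin> R"

definition cay_adj :: "('a, 'b) monoid_scheme \<Rightarrow> 'a set \<Rightarrow> 'a \<Rightarrow> 'a \<Rightarrow> bool" where
  "cay_adj G R g h \<longleftrightarrow> g \<in> carrier G \<and> h \<in> carrier G \<and>
     (\<exists>r\<in>R. h = r \<otimes>\<^bsub>G\<^esub> g \<or> g = r \<otimes>\<^bsub>G\<^esub> h)"

definition cay_aut :: "('a, 'b) monoid_scheme \<Rightarrow> 'a set \<Rightarrow> ('a \<Rightarrow> 'a) set" where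
  "cay_aut G R = {\<sigma> \<in> extensional (carrier G). bij_betw \<sigma> (carrier G) (carrier G) \<and>
      (\<forall>g\<in>carrier G. \<forall>h\<in>carrier G. cay_adj G R (\<sigma> g) (\<sigma> h) \<longleftrightarrow> cay_adj G R g h)}"

definition is_GRR :: "('a, 'b) monoid_scheme \<Rightarrow> 'a set \<Rightarrow> bool" where
  "is_GRR G R \<longleftrightarrow> cay_aut G R = {(\<lambda>x\<in>carrier G. x \<otimes>\<^bsub>G\<^esub> a) | a. a \<in> carrier G}"

definition cay_compl :: "('a, 'b) monoid_scheme \<Rightarrow> 'a set \<Rightarrow> 'a set" where
  "cay_compl G R = carrier G - ({\<one>\<^bsub>G\<^esub>} \<union> R)"

text \<open>Cay(G,R)[X]_I: isolated vertices of the subgraph induced on X.\<close>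
definition cay_isolated :: "('a, 'b) monoid_scheme \<Rightarrow> 'a set \<Rightarrow> 'a set \<Rightarrow> 'a set" where
  "cay_isolated G R S = {v. v \<in> S \<and> (\<forall>w. w \<in> S \<longrightarrow> \<not> cay_adj G R v w)}"

end

theory Submission
  imports Defs
begin

context group begin

lemma canc1: "g \<in> carrier G \<Longrightarrow> x \<in> carrier G \<Longrightarrow> g \<otimes> (inv g \<otimes> x) = x"
  by (simp add: m_assoc[symmetric])
lemma canc2: "g \<in> carrier G \<Longrightarrow> x \<in> carrier G \<Longrightarrow> inv g \<otimes> (g \<otimes> x) = x"
  by (simp add: m_assoc[symmetric])

lemma cs_sub: "cayley_subset G R \<Longrightarrow> R \<subseteq> carrier G"
  by (simp add: cayley_subset_def)
lemma cs_inv: "cayley_subset G R \<Longrightarrow> r \<in> R \<Longrightarrow> inv r \<in> R"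
  by (simp add: cayley_subset_def)
lemma cs_one: "cayley_subset G R \<Longrightarrow> \<one> \<notin> R"
  by (simp add: cayley_subset_def)

lemma adj_iff:
  assumes "cayley_subset G S"
  shows "cay_adj G S u v \<longleftrightarrow> u \<in> carrier G \<and> v \<in> carrier G \<and> v \<otimes> inv u \<in> S"
proof
  assume a: "cay_adj G S u v"
  then have u: "u \<in> carrier G" and v: "v \<in> carrier G" by (auto simp: cay_adj_def)
  from a obtain r where r: "r \<in> S" and h: "v = r \<otimes> u \<or> u = r \<otimes> v" by (auto simp: cay_adj_def)
  have rc: "r \<in> carrier G" using r cs_sub[OF assms] by auto
  from h show "u \<in> carrier G \<and> v \<in> carrier G \<and> v \<otimes> inv u \<in> S"
  proof
    assume "v = r \<otimes> u"
    then have "v \<otimes> inv u = r" using u rc by (simp add: m_assoc)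
    then show ?thesis using u v r by simp
  next
    assume "u = r \<otimes> v"
    then have "v \<otimes> inv u = inv r" using v rc by (simp add: inv_mult_group m_assoc[symmetric])
    then show ?thesis using u v r cs_inv[OF assms] by simp
  qed
next
  assume "u \<in> carrier G \<and> v \<in> carrier G \<and> v \<otimes> inv u \<in> S"
  then show "cay_adj G S u v"
    unfolding cay_adj_def
    by (intro conjI bexI[of _ "v \<otimes> inv u"] disjI1) (auto simp: m_assoc)
qed

lemma adj_sym: "cay_adj G S u v \<longleftrightarrow> cay_adj G S v u"
  unfolding cay_adj_def by blast

lemma adj_carr: "cay_adj G S u v \<Longrightarrow> u \<in> carrier G \<and> v \<in> carrier G"
  unfolding cay_adj_def by blast

lemma adj_irr: "cayley_subset G S \<Longrightarrow> \<not> cay_adj G S u u"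
  by (simp add: adj_iff cs_one)

lemma adj_one: "cayley_subset G S \<Longrightarrow> cay_adj G S \<one> v \<longleftrightarrow> v \<in> S"
  using cs_sub[of S] by (auto simp: adj_iff)

lemma adj_tr:
  assumes "cayley_subset G S" "u \<in> carrier G" "v \<in> carrier G" "g \<in> carrier G"
  shows "cay_adj G S (u \<otimes> g) (v \<otimes> g) \<longleftrightarrow> cay_adj G S u v"
proof -
  have "(v \<otimes> g) \<otimes> inv (u \<otimes> g) = v \<otimes> inv u"
    using assms by (simp add: inv_mult_group m_assoc canc1)
  then show ?thesis using assms by (simp add: adj_iff[OF assms(1)])
qed

lemma compl_cs: "cayley_subset G R \<Longrightarrow> cayley_subset G (cay_compl G R)"
proof -
  assume a: "cayley_subset G R"
  have "inv r \<in> cay_compl G R" if r: "r \<in> cay_compl G R" for r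
  proof -
    have rc: "r \<in> carrier G" "r \<noteq> \<one>" "r \<notin> R" using r by (auto simp: cay_compl_def)
    have "inv r \<noteq> \<one>" using rc by (metis inv_inv one_closed inv_one)
    moreover have "inv r \<notin> R" using rc cs_inv[OF a, of "inv r"] by auto
    ultimately show ?thesis using rc by (auto simp: cay_compl_def)
  qed
  then show ?thesis by (auto simp: cayley_subset_def cay_compl_def)
qed

lemma compl_compl: "cayley_subset G R \<Longrightarrow> cay_compl G (cay_compl G R) = R"
  unfolding cay_compl_def using cs_sub[of R] cs_one[of R] by auto

lemma adj_compl:
  assumes "cayley_subset G R"
  shows "cay_adj G (cay_compl G R) u v \<longleftrightarrow> u \<in> carrier G \<and> v \<in> carrier G \<and> u \<noteq> v \<and> \<not> cay_adj G R u v"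
proof -
  have "u \<in> carrier G \<Longrightarrow> v \<in> carrier G \<Longrightarrow> v \<otimes> inv u = \<one> \<longleftrightarrow> u = v"
  proof
    assume u: "u \<in> carrier G" and v: "v \<in> carrier G" and e: "v \<otimes> inv u = \<one>"
    have "inv (inv u) = v" by (rule inv_equality[OF e]) (use u v in auto)
    then show "u = v" using u by simp
  next
    assume "u \<in> carrier G" "v \<in> carrier G" "u = v" then show "v \<otimes> inv u = \<one>" by simp
  qed
  moreover have "cay_adj G (cay_compl G R) u v \<longleftrightarrow> u \<in> carrier G \<and> v \<in> carrier G \<and> v \<otimes> inv u \<in> cay_compl G R"
    by (rule adj_iff[OF compl_cs[OF assms]])
  moreover have "cay_adj G R u v \<longleftrightarrow> u \<in> carrier G \<and> v \<in> carrier G \<and> v \<otimes> inv u \<in> R"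
    by (rule adj_iff[OF assms])
  ultimately show ?thesis
    unfolding cay_compl_def by auto
qed

lemma adj_compl_ex:
  assumes "cayley_subset G R" "u \<in> carrier G" "v \<in> carrier G" "u \<noteq> v"
  shows "cay_adj G (cay_compl G R) u v \<longleftrightarrow> \<not> cay_adj G R u v"
  using adj_compl[OF assms(1)] assms by auto

lemma aut_compl:
  assumes cs: "cayley_subset G R"
  shows "cay_aut G (cay_compl G R) = cay_aut G R"
proof -
  have key: "(\<forall>g\<in>carrier G. \<forall>h\<in>carrier G. cay_adj G (cay_compl G R) (s g) (s h) \<longleftrightarrow> cay_adj G (cay_compl G R) g h)
     \<longleftrightarrow> (\<forall>g\<in>carrier G. \<forall>h\<in>carrier G. cay_adj G R (s g) (s h) \<longleftrightarrow> cay_adj G R g h)"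
    if b: "bij_betw s (carrier G) (carrier G)" for s
  proof -
    have sc: "s g \<in> carrier G" if "g \<in> carrier G" for g using b that bij_betwE by blast
    have inj: "s g = s h \<longleftrightarrow> g = h" if "g \<in> carrier G" "h \<in> carrier G" for g h
      using inj_on_eq_iff[OF bij_betw_imp_inj_on[OF b]] that by blast
    have "cay_adj G (cay_compl G R) (s g) (s h) \<longleftrightarrow> cay_adj G (cay_compl G R) g h
       \<longleftrightarrow> (cay_adj G R (s g) (s h) \<longleftrightarrow> cay_adj G R g h)"
      if g: "g \<in> carrier G" and h: "h \<in> carrier G" for g h
      using adj_compl[OF cs, of "s g" "s h"] adj_compl[OF cs, of g h] sc[OF g] sc[OF h] inj[OF g h] g h
        adj_irr[OF cs, of g] adj_irr[OF cs, of "s g"]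
      by (cases "g = h") auto
    then show ?thesis by auto
  qed
  show ?thesis unfolding cay_aut_def using key by blast
qed

lemma GRR_fix:
  assumes "is_GRR G R" "s \<in> cay_aut G R" "s \<one> = \<one>" "v \<in> carrier G"
  shows "s v = v"
proof -
  obtain a where a: "a \<in> carrier G" and sa: "s = (\<lambda>x\<in>carrier G. x \<otimes> a)"
    using assms(1,2) unfolding is_GRR_def by auto
  have "a = \<one>" using assms(3) a sa by simp
  then show ?thesis using sa assms(4) by simp
qed

lemma aut_right:
  assumes "s \<in> cay_aut G R" "g \<in> carrier G" "cayley_subset G R"
  shows "(\<lambda>v\<in>carrier G. s v \<otimes> g) \<in> cay_aut G R"
proof -
  have b: "bij_betw s (carrier G) (carrier G)" and ad: "\<forall>x\<in>carrier G. \<forall>y\<in>carrier G. cay_adj G R (s x) (s y) \<longleftrightarrow> cay_adj G R x y"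
    using assms(1) unfolding cay_aut_def by auto
  have sc: "s x \<in> carrier G" if "x \<in> carrier G" for x using b that bij_betwE by blast
  have br: "bij_betw (\<lambda>v. v \<otimes> g) (carrier G) (carrier G)"
    by (rule bij_betw_byWitness[where f'="\<lambda>v. v \<otimes> inv g"]) (use assms(2) in \<open>auto simp: m_assoc\<close>)
  have "bij_betw ((\<lambda>v. v \<otimes> g) \<circ> s) (carrier G) (carrier G)"
    using bij_betw_trans[OF b br] .
  then have b2: "bij_betw (\<lambda>v\<in>carrier G. s v \<otimes> g) (carrier G) (carrier G)"
    by (rule bij_betw_cong[THEN iffD1, rotated]) auto
  show ?thesis unfolding cay_aut_def
    using b2 ad sc adj_tr[OF assms(3) _ _ assms(2)] by auto
qed

end

context group begin
definition dsw :: "'a \<Rightarrow> 'a \<Rightarrow> 'a \<Rightarrow> 'a \<Rightarrow> 'a \<Rightarrow> 'a" where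
  "dsw a b c d v = (if v = a then b else if v = b then a else if v = c then d else if v = d then c else v)"

lemma aut_dsw:
  assumes cs: "cayley_subset G R"
    and car: "a \<in> carrier G" "b \<in> carrier G" "c \<in> carrier G" "d \<in> carrier G"
    and ne: "a \<noteq> b" "a \<noteq> c" "a \<noteq> d" "b \<noteq> c" "b \<noteq> d"
    and D: "\<And>z. z \<in> carrier G \<Longrightarrow> z \<noteq> a \<Longrightarrow> z \<noteq> b \<Longrightarrow> z \<noteq> c \<Longrightarrow> z \<noteq> d \<Longrightarrow>
            (cay_adj G R z a \<longleftrightarrow> cay_adj G R z b) \<and> (cay_adj G R z c \<longleftrightarrow> cay_adj G R z d)"
    and X1: "cay_adj G R a c \<longleftrightarrow> cay_adj G R b d"
    and X2: "cay_adj G R a d \<longleftrightarrow> cay_adj G R b c"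
  shows "(\<lambda>v\<in>carrier G. dsw a b c d v) \<in> cay_aut G R"
proof -
  let ?t = "dsw a b c d"
  have tc: "?t v \<in> carrier G" if "v \<in> carrier G" for v using that car by (simp add: dsw_def)
  have tt: "?t (?t v) = v" for v using ne by (auto simp: dsw_def)
  have b: "bij_betw ?t (carrier G) (carrier G)"
    by (rule bij_betw_byWitness[where f'="?t"]) (use tc tt in auto)
  have b2: "bij_betw (\<lambda>v\<in>carrier G. ?t v) (carrier G) (carrier G)"
    by (rule bij_betw_cong[THEN iffD1, OF _ b]) auto
  have ta: "?t a = b" and tb: "?t b = a" and tcc: "?t c = d" and td: "?t d = c"
    using ne by (auto simp: dsw_def)
  have tz: "?t z = z" if "z \<noteq> a" "z \<noteq> b" "z \<noteq> c" "z \<noteq> d" for z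
    using that by (simp add: dsw_def)
  have sab: "cay_adj G R b a \<longleftrightarrow> cay_adj G R a b" and scd: "cay_adj G R d c \<longleftrightarrow> cay_adj G R c d"
    by (rule adj_sym)+
  have X1': "cay_adj G R c a \<longleftrightarrow> cay_adj G R d b" and X2': "cay_adj G R d a \<longleftrightarrow> cay_adj G R c b"
    using X1 X2 adj_sym by blast+
  have irr: "\<not> cay_adj G R z z" for z by (rule adj_irr[OF cs])
  have D1: "(cay_adj G R z a \<longleftrightarrow> cay_adj G R z b) \<and> (cay_adj G R z c \<longleftrightarrow> cay_adj G R z d)
     \<and> (cay_adj G R a z \<longleftrightarrow> cay_adj G R b z) \<and> (cay_adj G R c z \<longleftrightarrow> cay_adj G R d z)"
    if "z \<in> carrier G" "z \<noteq> a" "z \<noteq> b" "z \<noteq> c" "z \<noteq> d" for z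
    using D[OF that] adj_sym by blast
  have ad: "cay_adj G R (?t u) (?t v) \<longleftrightarrow> cay_adj G R u v" if u: "u \<in> carrier G" and v: "v \<in> carrier G" for u v
  proof -
    consider "u = a" | "u = b" | "u = c" | "u = d" | "u \<noteq> a \<and> u \<noteq> b \<and> u \<noteq> c \<and> u \<noteq> d" by blast
    then show ?thesis
    proof cases
      case 5
      note tu = tz[OF conjunct1[OF 5] conjunct1[OF conjunct2[OF 5]] conjunct1[OF conjunct2[OF conjunct2[OF 5]]] conjunct2[OF conjunct2[OF conjunct2[OF 5]]]]
      consider "v = a" | "v = b" | "v = c" | "v = d" | "v \<noteq> a \<and> v \<noteq> b \<and> v \<noteq> c \<and> v \<noteq> d" by blast
      then show ?thesis
      proof cases
        case 5 then show ?thesis using tu tz by simp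
      qed (use D1[OF u] 5 tu ta tb tcc td in simp_all)
    next
      case 1
      consider "v = a" | "v = b" | "v = c" | "v = d" | "v \<noteq> a \<and> v \<noteq> b \<and> v \<noteq> c \<and> v \<noteq> d" by blast
      then show ?thesis
        by cases (use 1 D1[OF v] tz ta tb tcc td X1 X2 sab irr in simp_all)
    next
      case 2
      consider "v = a" | "v = b" | "v = c" | "v = d" | "v \<noteq> a \<and> v \<noteq> b \<and> v \<noteq> c \<and> v \<noteq> d" by blast
      then show ?thesis
        by cases (use 2 D1[OF v] tz ta tb tcc td X1 X2 sab irr in simp_all)
    next
      case 3
      consider "v = a" | "v = b" | "v = c" | "v = d" | "v \<noteq> a \<and> v \<noteq> b \<and> v \<noteq> c \<and> v \<noteq> d" by blast
      then show ?thesis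
        by cases (use 3 D1[OF v] tz ta tb tcc td X1' X2' scd irr in simp_all)
    next
      case 4
      consider "v = a" | "v = b" | "v = c" | "v = d" | "v \<noteq> a \<and> v \<noteq> b \<and> v \<noteq> c \<and> v \<noteq> d" by blast
      then show ?thesis
        by cases (use 4 D1[OF v] tz ta tb tcc td X1' X2' scd irr in simp_all)
    qed
  qed
  show ?thesis unfolding cay_aut_def using b2 ad by auto
qed

end

context group begin

lemma nbr_card:
  assumes cs: "cayley_subset G R" and v: "v \<in> carrier G"
  shows "card {w \<in> carrier G. cay_adj G R v w} = card R"
proof -
  have "{w \<in> carrier G. cay_adj G R v w} = (\<lambda>r. r \<otimes> v) ` R"
  proof (intro equalityI subsetI)
    fix w assume "w \<in> {w \<in> carrier G. cay_adj G R v w}"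
    then have w: "w \<in> carrier G" "w \<otimes> inv v \<in> R" using adj_iff[OF cs] by auto
    then have "w = (w \<otimes> inv v) \<otimes> v" using v by (simp add: m_assoc)
    then show "w \<in> (\<lambda>r. r \<otimes> v) ` R" using w by blast
  next
    fix w assume "w \<in> (\<lambda>r. r \<otimes> v) ` R"
    then obtain r where r: "r \<in> R" "w = r \<otimes> v" by auto
    have rc: "r \<in> carrier G" using r cs_sub[OF cs] by auto
    have "w \<otimes> inv v = r" using r rc v by (simp add: m_assoc)
    then show "w \<in> {w \<in> carrier G. cay_adj G R v w}" using r rc v adj_iff[OF cs] by auto
  qed
  moreover have "inj_on (\<lambda>r. r \<otimes> v) R"
  proof (rule inj_onI)
    fix r r' assume "r \<in> R" "r' \<in> R" "r \<otimes> v = r' \<otimes> v"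
    then show "r = r'" using cs_sub[OF cs] v right_cancel by blast
  qed
  ultimately show ?thesis by (simp add: card_image)
qed

lemma iso_mem: "x \<in> cay_isolated G S S \<longleftrightarrow> x \<in> S \<and> (\<forall>w\<in>S. \<not> cay_adj G S x w)"
  unfolding cay_isolated_def by auto

lemma compl_mem: "v \<in> cay_compl G R \<longleftrightarrow> v \<in> carrier G \<and> v \<noteq> \<one> \<and> v \<notin> R"
  unfolding cay_compl_def by auto

lemma Yprop:
  assumes cs: "cayley_subset G R" and y: "y \<in> cay_isolated G (cay_compl G R) (cay_compl G R)"
    and w: "w \<in> carrier G" "w \<noteq> \<one>" "w \<notin> R" "w \<noteq> y"
  shows "cay_adj G R y w"
proof -
  have yc: "y \<in> carrier G" and "w \<in> cay_compl G R" using y w by (auto simp: iso_mem compl_mem)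
  then have "\<not> cay_adj G (cay_compl G R) y w" using y by (auto simp: iso_mem)
  then show ?thesis using adj_compl_ex[OF cs yc w(1)] w(4) by auto
qed

lemma dlem:
  assumes cs: "cayley_subset G R" and fin: "finite (carrier G)"
    and x: "x \<in> cay_isolated G R R" and y: "y \<in> cay_isolated G (cay_compl G R) (cay_compl G R)"
  shows "\<exists>q\<in>carrier G. q \<noteq> \<one> \<and> q \<noteq> x \<and> q \<noteq> y \<and> cay_adj G R q y \<and> \<not> cay_adj G R q x \<and>
    (\<forall>z\<in>carrier G. z \<noteq> \<one> \<and> z \<noteq> q \<and> z \<noteq> x \<and> z \<noteq> y \<longrightarrow> (cay_adj G R z x \<longleftrightarrow> cay_adj G R z y))"
proof -
  have xR: "x \<in> R" and xiso: "\<And>w. w \<in> R \<Longrightarrow> \<not> cay_adj G R x w" using x by (auto simp: iso_mem)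
  have xc: "x \<in> carrier G" using xR cs_sub[OF cs] by auto
  have yc: "y \<in> carrier G" and y1: "y \<noteq> \<one>" and yR: "y \<notin> R" using y by (auto simp: iso_mem compl_mem)
  define Nx where "Nx = {w \<in> carrier G. cay_adj G R x w}"
  define Ny where "Ny = {w \<in> carrier G. cay_adj G R y w}"
  define A0 where "A0 = Nx - {y}"
  define B0 where "B0 = Ny - {x}"
  have cNx: "card Nx = card R" unfolding Nx_def by (rule nbr_card[OF cs xc])
  have cNy: "card Ny = card R" unfolding Ny_def by (rule nbr_card[OF cs yc])
  have fNx: "finite Nx" "finite Ny" using fin unfolding Nx_def Ny_def by auto
  have yx: "y \<in> Nx \<longleftrightarrow> x \<in> Ny" unfolding Nx_def Ny_def using xc yc adj_sym by blast
  have cA: "card A0 = card B0" unfolding A0_def B0_def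
    using cNx cNy yx by (simp add: card_Diff_singleton_if fNx)
  have x1: "cay_adj G R x \<one>" using adj_one[OF cs] xR adj_sym by blast
  have oneA: "\<one> \<in> A0" unfolding A0_def Nx_def using x1 y1 by auto
  have y1n: "\<not> cay_adj G R y \<one>" using adj_one[OF cs] yR adj_sym by blast
  have sub: "A0 - {\<one>} \<subseteq> B0"
  proof
    fix z assume z: "z \<in> A0 - {\<one>}"
    then have zc: "z \<in> carrier G" and xz: "cay_adj G R x z" and zy: "z \<noteq> y" and z1: "z \<noteq> \<one>"
      unfolding A0_def Nx_def by auto
    have zR: "z \<notin> R" using xiso xz by auto
    have "cay_adj G R y z" using Yprop[OF cs y zc z1 zR zy] .
    moreover have "z \<noteq> x" using xz adj_irr[OF cs] by auto
    ultimately show "z \<in> B0" unfolding B0_def Ny_def using zc by auto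
  qed
  have fA: "finite A0" "finite B0" unfolding A0_def B0_def using fNx by auto
  have "card (A0 - {\<one>}) = card A0 - 1" using oneA fA by simp
  moreover have "card A0 \<ge> 1" using oneA fA by (metis One_nat_def Suc_leI card_gt_0_iff empty_iff)
  ultimately have "card (B0 - (A0 - {\<one>})) = 1"
    using card_Diff_subset[OF finite_subset[OF sub fA(2)] sub] cA by simp
  then obtain q where q: "B0 - (A0 - {\<one>}) = {q}" by (meson card_1_singletonE)
  have qB: "q \<in> B0" and qA: "q \<notin> A0 - {\<one>}" using q by auto
  have qc: "q \<in> carrier G" and yq: "cay_adj G R y q" and qx: "q \<noteq> x" using qB unfolding B0_def Ny_def by auto
  have q1: "q \<noteq> \<one>" using yq y1n by auto
  have qy: "q \<noteq> y" using yq adj_irr[OF cs] by auto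
  have nxq: "\<not> cay_adj G R x q" using qA q1 qy qc unfolding A0_def Nx_def by auto
  show ?thesis
  proof (intro bexI[of _ q] conjI ballI impI)
    fix z assume zc: "z \<in> carrier G" and zz: "z \<noteq> \<one> \<and> z \<noteq> q \<and> z \<noteq> x \<and> z \<noteq> y"
    show "cay_adj G R z x \<longleftrightarrow> cay_adj G R z y"
    proof
      assume "cay_adj G R z x"
      then have "z \<in> A0 - {\<one>}" unfolding A0_def Nx_def using zc zz adj_sym by blast
      then have "z \<in> B0" using sub by auto
      then show "cay_adj G R z y" unfolding B0_def Ny_def using adj_sym by blast
    next
      assume "cay_adj G R z y"
      then have "z \<in> B0" unfolding B0_def Ny_def using zc zz adj_sym by blast
      then have "z \<in> A0 - {\<one>}" using q zz by auto
      then show "cay_adj G R z x" unfolding A0_def Nx_def using adj_sym by blast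
    qed
  qed (use qc q1 qx qy yq nxq adj_sym in auto)
qed

end

context group begin

lemma core0:
  assumes cs: "cayley_subset G R" and fin: "finite (carrier G)"
    and x: "x \<in> cay_isolated G R R" and y: "y \<in> cay_isolated G (cay_compl G R) (cay_compl G R)"
    and nxy: "\<not> cay_adj G R x y"
  shows "\<exists>q\<in>carrier G. q \<noteq> \<one> \<and> q \<noteq> x \<and> q \<noteq> y \<and> cay_adj G R q y \<and> \<not> cay_adj G R q x \<and>
    (\<forall>z\<in>carrier G. z \<noteq> \<one> \<and> z \<noteq> q \<and> z \<noteq> x \<and> z \<noteq> y \<longrightarrow>
       (cay_adj G R z x \<longleftrightarrow> cay_adj G R z y) \<and> (cay_adj G R z \<one> \<longleftrightarrow> cay_adj G R z q))"
proof -
  have xR: "x \<in> R" and xiso: "\<And>w. w \<in> R \<Longrightarrow> \<not> cay_adj G R x w" using x by (auto simp: iso_mem)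
  have xc: "x \<in> carrier G" using xR cs_sub[OF cs] by auto
  have x1: "x \<noteq> \<one>" using xR cs_one[OF cs] by auto
  have yc: "y \<in> carrier G" and y1: "y \<noteq> \<one>" and yR: "y \<notin> R" using y by (auto simp: iso_mem compl_mem)
  obtain q where qc: "q \<in> carrier G" and q1: "q \<noteq> \<one>" and qx: "q \<noteq> x" and qy: "q \<noteq> y"
    and aqy: "cay_adj G R q y" and naqx: "\<not> cay_adj G R q x"
    and D: "\<And>z. z \<in> carrier G \<Longrightarrow> z \<noteq> \<one> \<Longrightarrow> z \<noteq> q \<Longrightarrow> z \<noteq> x \<Longrightarrow> z \<noteq> y \<Longrightarrow> (cay_adj G R z x \<longleftrightarrow> cay_adj G R z y)"
    using dlem[OF cs fin x y] by blast
  have adjR: "cay_adj G R u v \<longleftrightarrow> v \<otimes> inv u \<in> R" if "u \<in> carrier G" "v \<in> carrier G" for u v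
    using adj_iff[OF cs] that by auto
  have a1: "cay_adj G R v \<one> \<longleftrightarrow> v \<in> R" for v using adj_one[OF cs] adj_sym by blast
  have Rc: "v \<in> carrier G" if "v \<in> R" for v using that cs_sub[OF cs] by auto
  have Nx: "cay_adj G R x v \<longleftrightarrow> v = \<one> \<or> (v \<notin> R \<and> v \<noteq> \<one> \<and> v \<noteq> y \<and> v \<noteq> q)" if vc: "v \<in> carrier G" for v
  proof
    assume a: "cay_adj G R x v"
    have "v \<notin> R" using xiso a by auto
    moreover have "v \<noteq> y" using a nxy by auto
    moreover have "v \<noteq> q" using a naqx adj_sym by blast
    ultimately show "v = \<one> \<or> (v \<notin> R \<and> v \<noteq> \<one> \<and> v \<noteq> y \<and> v \<noteq> q)" by auto
  next
    assume "v = \<one> \<or> (v \<notin> R \<and> v \<noteq> \<one> \<and> v \<noteq> y \<and> v \<noteq> q)"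
    then show "cay_adj G R x v"
    proof
      assume "v = \<one>" then show ?thesis using a1 xR adj_sym by blast
    next
      assume h: "v \<notin> R \<and> v \<noteq> \<one> \<and> v \<noteq> y \<and> v \<noteq> q"
      then have "cay_adj G R y v" using Yprop[OF cs y vc] by auto
      then have "cay_adj G R v y" using adj_sym by blast
      moreover have "v \<noteq> x" using h xR by auto
      ultimately have "cay_adj G R v x" using D[OF vc] h by auto
      then show ?thesis using adj_sym by blast
    qed
  qed
  have Ny: "(v = y \<or> cay_adj G R y v) \<longleftrightarrow> (v \<notin> R \<and> v \<noteq> \<one>) \<or> (v = q \<and> q \<in> R)" if vc: "v \<in> carrier G" for v
  proof
    assume "v = y \<or> cay_adj G R y v"
    then show "(v \<notin> R \<and> v \<noteq> \<one>) \<or> (v = q \<and> q \<in> R)"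
    proof
      assume "v = y" then show ?thesis using yR y1 by auto
    next
      assume a: "cay_adj G R y v"
      have v1: "v \<noteq> \<one>" using a a1 yR adj_sym by blast
      show ?thesis
      proof (cases "v \<in> R")
        case True
        have vx: "v \<noteq> x" using a nxy adj_sym by blast
        have vy: "v \<noteq> y" using a adj_irr[OF cs] by auto
        have "v = q"
        proof (rule ccontr)
          assume "v \<noteq> q"
          then have "cay_adj G R v x" using D[OF vc v1 _ vx vy] a adj_sym by blast
          then show False using xiso True adj_sym by blast
        qed
        then show ?thesis using True by auto
      qed (use v1 in auto)
    qed
  next
    assume "(v \<notin> R \<and> v \<noteq> \<one>) \<or> (v = q \<and> q \<in> R)"
    then show "v = y \<or> cay_adj G R y v"
      using Yprop[OF cs y vc] aqy adj_sym by blast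
  qed
  define c where "c = y \<otimes> x"
  have cc: "c \<in> carrier G" unfolding c_def using xc yc by simp
  have cix: "c \<otimes> inv x = y" unfolding c_def using xc yc by (simp add: m_assoc)
  have S: "(v = c \<or> cay_adj G R c v) \<longleftrightarrow>
      (v \<noteq> x \<and> v \<noteq> \<one> \<and> (v \<in> R \<or> v = y \<or> v = q)) \<or> (v = q \<otimes> x \<and> q \<in> R)" if vc: "v \<in> carrier G" for v
  proof -
    define w where "w = v \<otimes> inv x"
    have wc: "w \<in> carrier G" unfolding w_def using vc xc by simp
    have e1: "v = c \<longleftrightarrow> w = y"
    proof
      assume "v = c" then show "w = y" unfolding w_def using cix by simp
    next
      assume "w = y" then have "v = y \<otimes> x" unfolding w_def using vc xc yc by (metis inv_solve_right)
      then show "v = c" unfolding c_def .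
    qed
    have e2: "cay_adj G R c v \<longleftrightarrow> cay_adj G R y w"
      using adj_tr[OF cs cc vc inv_closed[OF xc]] cix unfolding w_def by simp
    have e3: "w = \<one> \<longleftrightarrow> v = x" unfolding w_def using vc xc by (metis inv_solve_right l_one one_closed r_inv)
    have e4: "w \<in> R \<longleftrightarrow> cay_adj G R x v" unfolding w_def using adjR[OF xc vc] by simp
    have e5: "w = q \<longleftrightarrow> v = q \<otimes> x" unfolding w_def using vc xc qc by (metis inv_solve_right)
    have "(v = c \<or> cay_adj G R c v) \<longleftrightarrow> (w \<notin> R \<and> w \<noteq> \<one>) \<or> (w = q \<and> q \<in> R)"
      using e1 e2 Ny[OF wc] by blast
    also have "\<dots> \<longleftrightarrow> (\<not> cay_adj G R x v \<and> v \<noteq> x) \<or> (v = q \<otimes> x \<and> q \<in> R)"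
      using e3 e4 e5 by blast
    also have "\<dots> \<longleftrightarrow> (v \<noteq> x \<and> v \<noteq> \<one> \<and> (v \<in> R \<or> v = y \<or> v = q)) \<or> (v = q \<otimes> x \<and> q \<in> R)"
      using Nx[OF vc] by blast
    finally show ?thesis .
  qed
  have c1: "c \<noteq> \<one>"
  proof
    assume "c = \<one>"
    then have "y = inv x" unfolding c_def using xc yc by (metis inv_equality)
    then show False using cs_inv[OF cs xR] yR by simp
  qed
  have cy: "c \<noteq> y" unfolding c_def using xc yc x1 by simp
  have cq: "c = q"
  proof (cases "q \<in> R \<and> q \<otimes> x = \<one>")
    case False
    have "\<not> (\<one> = c \<or> cay_adj G R c \<one>)"
    proof
      assume "\<one> = c \<or> cay_adj G R c \<one>"
      then have "(\<one> = q \<otimes> x \<and> q \<in> R)" using S[OF one_closed] by auto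
      then show False using False by auto
    qed
    then have cR: "c \<notin> R" using a1 by auto
    have "c \<noteq> x \<and> c \<noteq> \<one> \<and> (c \<in> R \<or> c = y \<or> c = q) \<or> (c = q \<otimes> x \<and> q \<in> R)" using S[OF cc] by simp
    then show ?thesis
    proof
      assume "c \<noteq> x \<and> c \<noteq> \<one> \<and> (c \<in> R \<or> c = y \<or> c = q)"
      then show ?thesis using cR cy by auto
    next
      assume h: "c = q \<otimes> x \<and> q \<in> R"
      then have "y \<otimes> x = q \<otimes> x" unfolding c_def by simp
      then have "y = q" using xc yc qc right_cancel by blast
      then show ?thesis using h yR by auto
    qed
  next
    case True
    then have qR: "q \<in> R" and qx1: "q \<otimes> x = \<one>" by auto
    have "\<one> = c \<or> cay_adj G R c \<one>" using S[OF one_closed] qx1 qR by auto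
    then have cR: "c \<in> R" using c1 a1 by auto
    show ?thesis
    proof (rule ccontr)
      assume cq: "c \<noteq> q"
      have "q = c \<or> cay_adj G R c q" using S[OF qc] qx q1 qR by auto
      then have acq: "cay_adj G R c q" using cq by auto
      have "cay_adj G R (c \<otimes> x) (q \<otimes> x) \<longleftrightarrow> cay_adj G R c q" by (rule adj_tr[OF cs cc qc xc])
      then have "cay_adj G R (c \<otimes> x) \<one>" using acq qx1 by simp
      then have cxR: "c \<otimes> x \<in> R" using a1 by simp
      have "cay_adj G R x (c \<otimes> x) \<longleftrightarrow> (c \<otimes> x) \<otimes> inv x \<in> R" using adjR[OF xc] cc xc by simp
      moreover have "(c \<otimes> x) \<otimes> inv x = c" using cc xc by (simp add: m_assoc)
      ultimately have "cay_adj G R x (c \<otimes> x)" using cR by simp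
      then show False using xiso cxR by auto
    qed
  qed
  have Dq: "cay_adj G R z \<one> \<longleftrightarrow> cay_adj G R z q" if zc: "z \<in> carrier G" and zz: "z \<noteq> \<one>" "z \<noteq> q" "z \<noteq> x" "z \<noteq> y" for z
  proof -
    have "cay_adj G R z q \<longleftrightarrow> (z = c \<or> cay_adj G R c z)" using cq zz adj_sym by blast
    also have "\<dots> \<longleftrightarrow> z \<in> R"
    proof -
      have "\<not> (z = q \<otimes> x \<and> q \<in> R)"
      proof
        assume h: "z = q \<otimes> x \<and> q \<in> R"
        then have "c \<in> R" using cq by simp
        then have "cay_adj G R c \<one>" using a1 by simp
        then have "\<one> = c \<or> cay_adj G R c \<one>" by simp
        have "\<not> (\<one> \<noteq> x \<and> \<one> \<noteq> \<one> \<and> (\<one> \<in> R \<or> \<one> = y \<or> \<one> = q))" by simp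
        show False
        proof (cases "q \<otimes> x = \<one>")
          case True then show False using h zz by simp
        next
          case False
          have "\<not> (\<one> = c \<or> cay_adj G R c \<one>)" using S[OF one_closed] False by auto
          then show False using \<open>cay_adj G R c \<one>\<close> by simp
        qed
      qed
      then show ?thesis using S[OF zc] zz by auto
    qed
    also have "\<dots> \<longleftrightarrow> cay_adj G R z \<one>" using a1 by simp
    finally show ?thesis by simp
  qed
  show ?thesis
    using qc q1 qx qy aqy naqx D Dq by blast
qed

end

context group begin

lemma core:
  assumes cs: "cayley_subset G R" and fin: "finite (carrier G)"
    and x: "x \<in> cay_isolated G R R" and y: "y \<in> cay_isolated G (cay_compl G R) (cay_compl G R)"
  shows "\<exists>q\<in>carrier G. q \<noteq> \<one> \<and> q \<noteq> x \<and> q \<noteq> y \<and> cay_adj G R q y \<and> \<not> cay_adj G R q x \<and>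
    (\<forall>z\<in>carrier G. z \<noteq> \<one> \<and> z \<noteq> q \<and> z \<noteq> x \<and> z \<noteq> y \<longrightarrow>
       (cay_adj G R z x \<longleftrightarrow> cay_adj G R z y) \<and> (cay_adj G R z \<one> \<longleftrightarrow> cay_adj G R z q))"
proof (cases "cay_adj G R x y")
  case False
  then show ?thesis using core0[OF cs fin x y] by blast
next
  case True
  let ?Rc = "cay_compl G R"
  have csc: "cayley_subset G ?Rc" by (rule compl_cs[OF cs])
  have xc: "x \<in> carrier G" using x cs_sub[OF cs] by (auto simp: iso_mem)
  have yc: "y \<in> carrier G" using y by (auto simp: iso_mem compl_mem)
  have x': "x \<in> cay_isolated G (cay_compl G ?Rc) (cay_compl G ?Rc)" using x compl_compl[OF cs] by simp
  have n: "\<not> cay_adj G ?Rc y x" using True adj_compl[OF cs] adj_sym by blast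
  obtain q where qc: "q \<in> carrier G" and q1: "q \<noteq> \<one>" and qy: "q \<noteq> y" and qx: "q \<noteq> x"
    and a1: "cay_adj G ?Rc q x" and a2: "\<not> cay_adj G ?Rc q y"
    and D: "\<And>z. z \<in> carrier G \<Longrightarrow> z \<noteq> \<one> \<and> z \<noteq> q \<and> z \<noteq> y \<and> z \<noteq> x \<Longrightarrow>
       (cay_adj G ?Rc z y \<longleftrightarrow> cay_adj G ?Rc z x) \<and> (cay_adj G ?Rc z \<one> \<longleftrightarrow> cay_adj G ?Rc z q)"
    using core0[OF csc fin y x' n] by blast
  have b1: "\<not> cay_adj G R q x" using a1 adj_compl[OF cs] by auto
  have b2: "cay_adj G R q y" using a2 adj_compl[OF cs] qc yc qy by auto
  have b3: "(cay_adj G R z x \<longleftrightarrow> cay_adj G R z y) \<and> (cay_adj G R z \<one> \<longleftrightarrow> cay_adj G R z q)"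
    if zc: "z \<in> carrier G" and zz: "z \<noteq> \<one> \<and> z \<noteq> q \<and> z \<noteq> x \<and> z \<noteq> y" for z
    using D[OF zc] zz adj_compl_ex[OF cs zc xc] adj_compl_ex[OF cs zc yc] adj_compl_ex[OF cs zc qc]
      adj_compl_ex[OF cs zc one_closed] by auto
  show ?thesis using qc q1 qx qy b1 b2 b3 by blast
qed

lemma claimA:
  assumes cs: "cayley_subset G R" and fin: "finite (carrier G)" and grr: "is_GRR G R"
    and x: "x \<in> cay_isolated G R R" and y: "y \<in> cay_isolated G (cay_compl G R) (cay_compl G R)"
  shows False
proof -
  have xR: "x \<in> R" using x by (auto simp: iso_mem)
  have xc: "x \<in> carrier G" using xR cs_sub[OF cs] by auto
  have x1: "x \<noteq> \<one>" using xR cs_one[OF cs] by auto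
  have yc: "y \<in> carrier G" and y1: "y \<noteq> \<one>" and yR: "y \<notin> R" using y by (auto simp: iso_mem compl_mem)
  have xy: "x \<noteq> y" using xR yR by auto
  have a1: "cay_adj G R v \<one> \<longleftrightarrow> v \<in> R" for v using adj_one[OF cs] adj_sym by blast
  obtain q where qc: "q \<in> carrier G" and q1: "q \<noteq> \<one>" and qx: "q \<noteq> x" and qy: "q \<noteq> y"
    and aqy: "cay_adj G R q y" and naqx: "\<not> cay_adj G R q x"
    and D: "\<And>z. z \<in> carrier G \<Longrightarrow> z \<noteq> \<one> \<and> z \<noteq> q \<and> z \<noteq> x \<and> z \<noteq> y \<Longrightarrow>
       (cay_adj G R z x \<longleftrightarrow> cay_adj G R z y) \<and> (cay_adj G R z \<one> \<longleftrightarrow> cay_adj G R z q)"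
    using core[OF cs fin x y] by blast
  have tau: "(\<lambda>v\<in>carrier G. dsw x y \<one> q v) \<in> cay_aut G R"
  proof (rule aut_dsw[OF cs xc yc one_closed qc xy x1 qx[symmetric] y1 qy[symmetric]])
    fix z assume "z \<in> carrier G" "z \<noteq> x" "z \<noteq> y" "z \<noteq> \<one>" "z \<noteq> q"
    then show "(cay_adj G R z x \<longleftrightarrow> cay_adj G R z y) \<and> (cay_adj G R z \<one> \<longleftrightarrow> cay_adj G R z q)"
      using D by blast
  next
    show "cay_adj G R x \<one> \<longleftrightarrow> cay_adj G R y q" using a1 xR aqy adj_sym by blast
  next
    show "cay_adj G R x q \<longleftrightarrow> cay_adj G R y \<one>" using a1 yR naqx adj_sym by blast
  qed
  have sig: "(\<lambda>v\<in>carrier G. (\<lambda>v\<in>carrier G. dsw x y \<one> q v) v \<otimes> inv q) \<in> cay_aut G R"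
    by (rule aut_right[OF tau inv_closed[OF qc] cs])
  have s1: "(\<lambda>v\<in>carrier G. (\<lambda>v\<in>carrier G. dsw x y \<one> q v) v \<otimes> inv q) \<one> = \<one>"
    using qc x1 y1 by (simp add: dsw_def)
  have fx: "dsw x y \<one> q v = v \<otimes> q" if vc: "v \<in> carrier G" for v
  proof -
    have h: "dsw x y \<one> q v \<otimes> inv q = v" using GRR_fix[OF grr sig s1 vc] vc by simp
    have dc: "dsw x y \<one> q v \<in> carrier G" using vc xc yc qc by (simp add: dsw_def)
    have "dsw x y \<one> q v = (dsw x y \<one> q v \<otimes> inv q) \<otimes> q" using dc qc by (simp add: m_assoc)
    then show ?thesis using h by simp
  qed
  have all4: "v = x \<or> v = y \<or> v = \<one> \<or> v = q" if vc: "v \<in> carrier G" for v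
  proof (rule ccontr)
    assume "\<not> (v = x \<or> v = y \<or> v = \<one> \<or> v = q)"
    then have "dsw x y \<one> q v = v" by (auto simp: dsw_def)
    then have "v \<otimes> q = v" using fx[OF vc] by simp
    then show False using vc qc q1 by simp
  qed
  have e1: "y = x \<otimes> q" using fx[OF xc] by (simp add: dsw_def)
  have e2: "x = y \<otimes> q" using fx[OF yc] xy by (simp add: dsw_def)
  have e3: "\<one> = q \<otimes> q" using fx[OF qc] qx qy q1 by (simp add: dsw_def)
  have iq: "inv q = q" using inv_equality[OF e3[symmetric] qc qc] .
  have xx: "x \<otimes> x = \<one>"
  proof -
    have "x \<otimes> x \<in> carrier G" using xc by simp
    then have "x \<otimes> x = x \<or> x \<otimes> x = y \<or> x \<otimes> x = \<one> \<or> x \<otimes> x = q" using all4 by blast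
    moreover have "x \<otimes> x \<noteq> x" using xc x1 by simp
    moreover have "x \<otimes> x \<noteq> y" using e1 xc qc qx by simp
    moreover have "x \<otimes> x \<noteq> q"
    proof
      assume h: "x \<otimes> x = q"
      have "x \<otimes> y = (x \<otimes> x) \<otimes> q" using e1 xc qc by (simp add: m_assoc)
      also have "\<dots> = \<one>" using h e3 by simp
      finally have "x \<otimes> y = \<one>" .
      then have "inv y = x" by (rule inv_equality[OF _ yc xc])
      then have "inv x = y" using yc by (metis inv_inv)
      then show False using cs_inv[OF cs xR] yR by simp
    qed
    ultimately show ?thesis by blast
  qed
  have ix: "inv x = x" using inv_equality[OF xx xc xc] .
  have qxy: "q \<otimes> x = y"
  proof -
    have "q \<otimes> x \<in> carrier G" using xc qc by simp
    then have "q \<otimes> x = x \<or> q \<otimes> x = y \<or> q \<otimes> x = \<one> \<or> q \<otimes> x = q" using all4 by blast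
    moreover have "q \<otimes> x \<noteq> x" using xc qc q1 by simp
    moreover have "q \<otimes> x \<noteq> q" using xc qc x1 by simp
    moreover have "q \<otimes> x \<noteq> \<one>"
    proof
      assume "q \<otimes> x = \<one>"
      then have "inv x = q" using inv_equality xc qc by blast
      then show False using ix qx by simp
    qed
    ultimately show ?thesis by blast
  qed
  have adjxy: "cay_adj G R x y \<longleftrightarrow> q \<in> R"
  proof -
    have "y \<otimes> inv x = q \<otimes> x \<otimes> x" using qxy ix by simp
    also have "\<dots> = q" using xx qc xc by (simp add: m_assoc)
    finally show ?thesis using adj_iff[OF cs] xc yc by simp
  qed
  show False
  proof (cases "q \<in> R")
    case True
    have sw: "(\<lambda>v\<in>carrier G. dsw x q \<one> \<one> v) \<in> cay_aut G R"
    proof (rule aut_dsw[OF cs xc qc one_closed one_closed qx[symmetric] x1 x1 q1 q1])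
      fix z assume z: "z \<in> carrier G" "z \<noteq> x" "z \<noteq> q" "z \<noteq> \<one>" "z \<noteq> \<one>"
      then have zy: "z = y" using all4 by blast
      show "(cay_adj G R z x \<longleftrightarrow> cay_adj G R z q) \<and> (cay_adj G R z \<one> \<longleftrightarrow> cay_adj G R z \<one>)"
        using zy adjxy True aqy adj_sym by blast
    next
      show "cay_adj G R x \<one> \<longleftrightarrow> cay_adj G R q \<one>" using a1 xR True by blast
      then show "cay_adj G R x \<one> \<longleftrightarrow> cay_adj G R q \<one>" .
    qed
    have "(\<lambda>v\<in>carrier G. dsw x q \<one> \<one> v) x = x"
      by (rule GRR_fix[OF grr sw _ xc]) (simp add: dsw_def x1 q1 x1[symmetric] q1[symmetric])
    then show False using xc qx by (simp add: dsw_def)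
  next
    case False
    have sw: "(\<lambda>v\<in>carrier G. dsw q y \<one> \<one> v) \<in> cay_aut G R"
    proof (rule aut_dsw[OF cs qc yc one_closed one_closed qy q1 q1 y1 y1])
      fix z assume z: "z \<in> carrier G" "z \<noteq> q" "z \<noteq> y" "z \<noteq> \<one>" "z \<noteq> \<one>"
      then have zx: "z = x" using all4 by blast
      show "(cay_adj G R z q \<longleftrightarrow> cay_adj G R z y) \<and> (cay_adj G R z \<one> \<longleftrightarrow> cay_adj G R z \<one>)"
        using zx adjxy False naqx adj_sym by blast
    next
      show "cay_adj G R q \<one> \<longleftrightarrow> cay_adj G R y \<one>" using a1 yR False by blast
      then show "cay_adj G R q \<one> \<longleftrightarrow> cay_adj G R y \<one>" .
    qed
    have "(\<lambda>v\<in>carrier G. dsw q y \<one> \<one> v) q = q"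
      by (rule GRR_fix[OF grr sw _ qc]) (simp add: dsw_def q1 y1 q1[symmetric] y1[symmetric])
    then show False using qc qy by (simp add: dsw_def)
  qed
qed

end

context group begin

lemma conn:
  assumes cs: "cayley_subset G R" and fin: "finite (carrier G)" and grr: "is_GRR G R"
    and n2: "card (carrier G) > 2"
  shows "generate G R = carrier G"
proof (rule ccontr)
  assume ne: "generate G R \<noteq> carrier G"
  let ?H = "generate G R"
  have Rc: "R \<subseteq> carrier G" by (rule cs_sub[OF cs])
  have sg: "subgroup ?H G" by (rule generate_is_subgroup[OF Rc])
  have RH: "R \<subseteq> ?H" using generate.incl[of _ R G] by blast
  have Hc: "?H \<subseteq> carrier G" by (rule generate_incl[OF Rc])
  obtain g where gc: "g \<in> carrier G" and gH: "g \<notin> ?H" using ne Hc by blast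
  show False
  proof (cases "R = {}")
    case True
    have noadj: "\<not> cay_adj G R u v" for u v using adj_iff[OF cs] True by auto
    have c2: "card (carrier G - {\<one>}) \<ge> 2" using n2 by simp
    have "carrier G - {\<one>} \<noteq> {}" proof assume h: "carrier G - {\<one>} = {}" have "card (carrier G - {\<one>}) = 0" by (simp only: h card.empty) then show False using c2 by linarith qed
    then obtain a where a: "a \<in> carrier G - {\<one>}" by blast
    have c1: "card (carrier G - {\<one>} - {a}) \<ge> 1" using c2 a fin by simp
    have "carrier G - {\<one>} - {a} \<noteq> {}" proof assume h: "carrier G - {\<one>} - {a} = {}" have "card (carrier G - {\<one>} - {a}) = 0" by (simp only: h card.empty) then show False using c1 by linarith qed
    then obtain b where b: "b \<in> carrier G - {\<one>} - {a}" by blast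
    have ac: "a \<in> carrier G" "a \<noteq> \<one>" using a by auto
    have bc: "b \<in> carrier G" "b \<noteq> \<one>" "a \<noteq> b" using b by auto
    have sw: "(\<lambda>v\<in>carrier G. dsw a b \<one> \<one> v) \<in> cay_aut G R"
      by (rule aut_dsw[OF cs ac(1) bc(1) one_closed one_closed bc(3) ac(2) ac(2) bc(2) bc(2)])
        (use noadj in auto)
    have "(\<lambda>v\<in>carrier G. dsw a b \<one> \<one> v) a = a"
      by (rule GRR_fix[OF grr sw _ ac(1)]) (use ac bc in \<open>simp add: dsw_def\<close>)
    then show False using ac bc by (simp add: dsw_def)
  next
    case False
    then obtain k where kR: "k \<in> R" by blast
    have kc: "k \<in> carrier G" using kR Rc by auto
    have k1: "k \<noteq> \<one>" using kR cs_one[OF cs] by auto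
    have kH: "k \<in> ?H" using kR RH by auto
    define P where "P v \<longleftrightarrow> v \<otimes> inv g \<in> ?H" for v
    define c where "c = inv g \<otimes> k \<otimes> g"
    define ci where "ci = inv g \<otimes> inv k \<otimes> g"
    have cc: "c \<in> carrier G" "ci \<in> carrier G" unfolding c_def ci_def using gc kc by auto
    have conj: "P (v \<otimes> (inv g \<otimes> m \<otimes> g)) \<longleftrightarrow> P v" if vc: "v \<in> carrier G" and mH: "m \<in> ?H" for v m
    proof -
      have mc: "m \<in> carrier G" using mH Hc by auto
      have "(v \<otimes> (inv g \<otimes> m \<otimes> g)) \<otimes> inv g = (v \<otimes> inv g) \<otimes> m"
        using vc mc gc by (simp add: m_assoc)
      moreover have "(v \<otimes> inv g) \<otimes> m \<in> ?H \<longleftrightarrow> v \<otimes> inv g \<in> ?H"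
      proof
        assume "(v \<otimes> inv g) \<otimes> m \<in> ?H"
        then have "((v \<otimes> inv g) \<otimes> m) \<otimes> inv m \<in> ?H" using mH subgroup.m_closed[OF sg] subgroup.m_inv_closed[OF sg] by blast
        then show "v \<otimes> inv g \<in> ?H" using vc mc gc by (simp add: m_assoc)
      next
        assume "v \<otimes> inv g \<in> ?H" then show "(v \<otimes> inv g) \<otimes> m \<in> ?H" using mH subgroup.m_closed[OF sg] by blast
      qed
      ultimately show ?thesis unfolding P_def by simp
    qed
    have Pc: "P (v \<otimes> c) \<longleftrightarrow> P v" if "v \<in> carrier G" for v
      unfolding c_def using conj[OF that kH] .
    have Pci: "P (v \<otimes> ci) \<longleftrightarrow> P v" if "v \<in> carrier G" for v
      unfolding ci_def using conj[OF that subgroup.m_inv_closed[OF sg kH]] .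
    have cci1: "c \<otimes> ci = \<one>" unfolding c_def ci_def using gc kc
      by (simp add: m_assoc canc1)
    have "ci \<otimes> c = inv g \<otimes> (inv k \<otimes> (k \<otimes> g))" unfolding c_def ci_def using gc kc
      by (simp add: m_assoc canc1)
    also have "\<dots> = inv g \<otimes> g" using gc kc canc2[of k g] by simp
    also have "\<dots> = \<one>" using gc by simp
    finally have cci2: "ci \<otimes> c = \<one>" .
    note cci = cci1 cci2
    define s where "s = (\<lambda>v\<in>carrier G. if P v then v \<otimes> c else v)"
    define s' where "s' = (\<lambda>v. if P v then v \<otimes> ci else v)"
    have sc: "s v \<in> carrier G" if "v \<in> carrier G" for v unfolding s_def using that cc by auto
    have bij: "bij_betw s (carrier G) (carrier G)"
    proof (rule bij_betw_byWitness[where f'=s'])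
      show "\<forall>a\<in>carrier G. s' (s a) = a" unfolding s_def s'_def using Pc cc cci by (auto simp: m_assoc)
      show "\<forall>a\<in>carrier G. s (s' a) = a" unfolding s_def s'_def using Pci cc cci by (auto simp: m_assoc)
      show "s ` carrier G \<subseteq> carrier G" using sc by auto
      show "s' ` carrier G \<subseteq> carrier G" unfolding s'_def using cc by auto
    qed
    have adjP: "P u \<longleftrightarrow> P v" if a: "cay_adj G R u v" for u v
    proof -
      have uc: "u \<in> carrier G" and vc: "v \<in> carrier G" and r: "v \<otimes> inv u \<in> R" using a adj_iff[OF cs] by auto
      have rH: "v \<otimes> inv u \<in> ?H" using r RH by auto
      have e1: "v \<otimes> inv g = (v \<otimes> inv u) \<otimes> (u \<otimes> inv g)" using uc vc gc by (simp add: m_assoc canc2)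
      have e2: "u \<otimes> inv g = inv (v \<otimes> inv u) \<otimes> (v \<otimes> inv g)" using uc vc gc by (simp add: m_assoc inv_mult_group canc2)
      have "inv (v \<otimes> inv u) \<in> ?H" using rH subgroup.m_inv_closed[OF sg] by blast
      then show ?thesis unfolding P_def
      proof -
        assume iH: "inv (v \<otimes> inv u) \<in> ?H"
        show "(u \<otimes> inv g \<in> ?H) \<longleftrightarrow> (v \<otimes> inv g \<in> ?H)"
        proof
          assume "u \<otimes> inv g \<in> ?H"
          then have "(v \<otimes> inv u) \<otimes> (u \<otimes> inv g) \<in> ?H" using rH subgroup.m_closed[OF sg] by blast
          then show "v \<otimes> inv g \<in> ?H" using e1 by simp
        next
          assume "v \<otimes> inv g \<in> ?H"
          then have "inv (v \<otimes> inv u) \<otimes> (v \<otimes> inv g) \<in> ?H" using iH subgroup.m_closed[OF sg] by blast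
          then show "u \<otimes> inv g \<in> ?H" using e2 by simp
        qed
      qed
    qed
    have ad: "cay_adj G R (s u) (s v) \<longleftrightarrow> cay_adj G R u v" if uc: "u \<in> carrier G" and vc: "v \<in> carrier G" for u v
    proof (cases "P u"; cases "P v")
      assume "P u" "P v"
      then show ?thesis unfolding s_def using uc vc adj_tr[OF cs uc vc cc(1)] by simp
    next
      assume "\<not> P u" "\<not> P v"
      then show ?thesis unfolding s_def using uc vc by simp
    next
      assume h: "P u" "\<not> P v"
      then have "\<not> cay_adj G R u v" using adjP by blast
      moreover have "\<not> cay_adj G R (u \<otimes> c) v" using adjP h Pc[OF uc] by blast
      ultimately show ?thesis unfolding s_def using uc vc h by simp
    next
      assume h: "\<not> P u" "P v"
      then have "\<not> cay_adj G R u v" using adjP by blast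
      moreover have "\<not> cay_adj G R u (v \<otimes> c)" using adjP h Pc[OF vc] by blast
      ultimately show ?thesis unfolding s_def using uc vc h by simp
    qed
    have saut: "s \<in> cay_aut G R" unfolding cay_aut_def using bij ad by (auto simp: s_def)
    have P1: "\<not> P \<one>"
    proof
      assume "P \<one>"
      then have "inv g \<in> ?H" unfolding P_def using gc by simp
      then have "inv (inv g) \<in> ?H" using subgroup.m_inv_closed[OF sg] by blast
      then show False using gH gc by simp
    qed
    have s1: "s \<one> = \<one>" unfolding s_def using P1 by simp
    have Pg: "P g" unfolding P_def using gc subgroup.one_closed[OF sg] by simp
    have "s g = g" by (rule GRR_fix[OF grr saut s1 gc])
    then have "g \<otimes> c = g" unfolding s_def using Pg gc by simp
    then have "c = \<one>" using gc cc by simp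
    then have "g \<otimes> c = g \<otimes> \<one>" by simp
    moreover have "g \<otimes> c = k \<otimes> g" unfolding c_def using gc kc by (simp add: m_assoc canc1)
    ultimately have "k \<otimes> g = g" using gc by simp
    then show False using k1 kc gc by simp
  qed
qed

end

theorem lemma2p2:
  fixes G :: "('a, 'b) monoid_scheme" and R :: "'a set"
  assumes "group G" and "finite (carrier G)"
    and "cayley_subset G R" and "is_GRR G R"
  shows "(card (cay_isolated G R R) \<le> 1 \<or>
         card (cay_isolated G (cay_compl G R) (cay_compl G R)) \<le> 1) \<and>
        (card (carrier G) > 2 \<longrightarrow>
         (generate G (R - cay_isolated G R R) = carrier G \<and> card (cay_isolated G R R) \<le> 1) \<or>
         (generate G (cay_compl G R - cay_isolated G (cay_compl G R) (cay_compl G R)) = carrier G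
            \<and> card (cay_isolated G (cay_compl G R) (cay_compl G R)) \<le> 1))"
proof -
  interpret group G by (rule assms(1))
  have cs: "cayley_subset G R" and fin: "finite (carrier G)" and grr: "is_GRR G R" using assms by auto
  have csc: "cayley_subset G (cay_compl G R)" by (rule compl_cs[OF cs])
  have grrc: "is_GRR G (cay_compl G R)" using grr aut_compl[OF cs] unfolding is_GRR_def by simp
  have XY: "cay_isolated G R R = {} \<or> cay_isolated G (cay_compl G R) (cay_compl G R) = {}"
    using claimA[OF cs fin grr] by blast
  show ?thesis
  proof (rule conjI)
    show "card (cay_isolated G R R) \<le> 1 \<or> card (cay_isolated G (cay_compl G R) (cay_compl G R)) \<le> 1"
      using XY by auto
  next
    show "card (carrier G) > 2 \<longrightarrow>
         (generate G (R - cay_isolated G R R) = carrier G \<and> card (cay_isolated G R R) \<le> 1) \<or>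
         (generate G (cay_compl G R - cay_isolated G (cay_compl G R) (cay_compl G R)) = carrier G
            \<and> card (cay_isolated G (cay_compl G R) (cay_compl G R)) \<le> 1)"
    proof
      assume n2: "card (carrier G) > 2"
      from XY show "(generate G (R - cay_isolated G R R) = carrier G \<and> card (cay_isolated G R R) \<le> 1) \<or>
         (generate G (cay_compl G R - cay_isolated G (cay_compl G R) (cay_compl G R)) = carrier G
            \<and> card (cay_isolated G (cay_compl G R) (cay_compl G R)) \<le> 1)"
      proof
        assume "cay_isolated G R R = {}"
        then show ?thesis using conn[OF cs fin grr n2] by simp
      next
        assume "cay_isolated G (cay_compl G R) (cay_compl G R) = {}"
        then show ?thesis using conn[OF csc fin grrc n2] by simp
      qed
    qed
  qed
qed

end
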